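(* Let $d\in\mathbb{N}$. For all $u,v\in\mathbb{N}$, $$\begin{pmatrix}(1/v)\,I_d&0\\0&u\,I_d\end{pmatrix}\Pi\subseteq\Pi,$$ that is, $(x,y)\in\Pi$ implies $(x/v,\,uy)\in\Pi$.
   Context: For $z\in\mathbb{R}^d$, $\|z\|$ denotes the sup-norm distance from $z$ to $\mathbb{Z}^d$. Write $\mathbb{N}=\{1,2,\dots\}$. For $\psi:\mathbb{N}\to\mathbb{R}_{\ge 0}$, let $W(\psi)$ be the set of pairs $(x,y)\in\mathbb{R}^d\times\mathbb{R}^d$ for which $\|nx+y\|<\psi(n)$ holds for infinitely many $n\in\mathbb{N}$. $\mathcal{D}$ is the set of all non-increasing $\psi:\mathbb{N}\to\mathbb{R}_{\ge0}$ with $\sum_n\psi(n)^d=\infty$, and $\Pi=\bigcap_{\psi\in\mathcal{D}}W(\psi)$. $I_d$ is the $d\times d$ identity matrix. *)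

theory Defs
  imports "HOL-Analysis.Analysis"
begin

definition dist_int :: "real \<Rightarrow> real" where
  "dist_int t = (INF k\<in>(\<int>::real set). \<bar>t - k\<bar>)"

definition znorm :: "real ^ 'd \<Rightarrow> real" where
  "znorm z = Max (range (\<lambda>i. dist_int (z $ i)))"

definition W :: "(nat \<Rightarrow> real) \<Rightarrow> ((real ^ 'd) \<times> (real ^ 'd)) set" where
  "W \<psi> = {(x, y). infinite {n::nat. n \<ge> 1 \<and> znorm (of_nat n *\<^sub>R x + y) < \<psi> n}}"

definition Dclass :: "'d itself \<Rightarrow> (nat \<Rightarrow> real) set" where
  "Dclass _ = {\<psi>. (\<forall>n\<ge>1. \<psi> n \<ge> 0) \<and> (\<forall>m n. 1 \<le> m \<and> m \<le> n \<longrightarrow> \<psi> n \<le> \<psi> m)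
                  \<and> \<not> summable (\<lambda>n. \<psi> (Suc n) ^ CARD('d))}"

definition PiSet :: "((real ^ 'd) \<times> (real ^ 'd)) set" where
  "PiSet = (\<Inter>\<psi>\<in>Dclass TYPE('d). W \<psi>)"

end

theory Submission
  imports Defs
begin

lemma dist_int_round: "dist_int t = \<bar>t - of_int (round t)\<bar>"
proof -
  have ne: "(\<int>::real set) \<noteq> {}" by auto
  have lo: "\<And>k. k \<in> (\<int>::real set) \<Longrightarrow> \<bar>t - of_int (round t)\<bar> \<le> \<bar>t - k\<bar>"
    by (metis Ints_cases round_diff_minimal)
  have bdd: "bdd_below ((\<lambda>k. \<bar>t - k\<bar>) ` (\<int>::real set))"
    by (rule bdd_belowI[of _ 0]) auto
  have "dist_int t \<le> \<bar>t - of_int (round t)\<bar>"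
    unfolding dist_int_def by (rule cINF_lower[OF bdd]) auto
  moreover have "\<bar>t - of_int (round t)\<bar> \<le> dist_int t"
    unfolding dist_int_def using ne lo by (intro cINF_greatest) auto
  ultimately show ?thesis by linarith
qed

lemma dist_int_le: "k \<in> \<int> \<Longrightarrow> dist_int t \<le> \<bar>t - k\<bar>"
  by (metis Ints_cases dist_int_round round_diff_minimal)

lemma dist_int_nonneg: "dist_int t \<ge> 0"
  by (simp add: dist_int_round)

lemma dist_int_mult: "dist_int (real u * t) \<le> real u * dist_int t"
proof -
  have "dist_int (real u * t) \<le> \<bar>real u * t - real u * of_int (round t)\<bar>"
    by (rule dist_int_le) simp
  also have "\<dots> = real u * \<bar>t - of_int (round t)\<bar>"
    by (simp add: abs_mult right_diff_distrib[symmetric])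
  finally show ?thesis by (simp add: dist_int_round)
qed

lemma znorm_comp: "dist_int (z $ i) \<le> znorm z"
  unfolding znorm_def by (rule Max_ge) auto

lemma znorm_scale: "znorm (real u *\<^sub>R z) \<le> real u * znorm z"
  unfolding znorm_def[of "real u *\<^sub>R z"]
proof (subst Max_le_iff, simp, simp, clarify)
  fix i
  have "dist_int (real u * z $ i) \<le> real u * dist_int (z $ i)" by (rule dist_int_mult)
  also have "\<dots> \<le> real u * znorm z" by (intro mult_left_mono znorm_comp) auto
  finally show "dist_int ((real u *\<^sub>R z) $ i) \<le> real u * znorm z" by simp
qed

lemma block_bound:
  fixes \<psi> :: "nat \<Rightarrow> real" and K d :: nat
  assumes K: "K \<ge> 1" and nn: "\<forall>n\<ge>1. \<psi> n \<ge> 0"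
    and mono: "\<forall>m n. 1 \<le> m \<and> m \<le> n \<longrightarrow> \<psi> n \<le> \<psi> m"
  shows "(\<Sum>j<K * Suc N. \<psi> (Suc j) ^ d) \<le> real K * \<psi> 1 ^ d + real K * (\<Sum>m<N. \<psi> (K * Suc m) ^ d)"
proof (induction N)
  case 0
  have "(\<Sum>j<K. \<psi> (Suc j) ^ d) \<le> (\<Sum>j<K. \<psi> 1 ^ d)"
    using nn mono by (intro sum_mono power_mono) auto
  then show ?case by simp
next
  case (Suc N)
  have split: "{..<K * Suc (Suc N)} = {..<K * Suc N} \<union> {K * Suc N..<K * Suc N + K}"
    by auto
  have "(\<Sum>j\<in>{K * Suc N..<K * Suc N + K}. \<psi> (Suc j) ^ d) \<le> (\<Sum>j\<in>{K * Suc N..<K * Suc N + K}. \<psi> (K * Suc N) ^ d)"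
  proof (intro sum_mono power_mono)
    fix j assume "j \<in> {K * Suc N..<K * Suc N + K}"
    hence "K * Suc N \<le> Suc j" "1 \<le> K * Suc N" using K by auto
    thus "\<psi> (Suc j) \<le> \<psi> (K * Suc N)" "0 \<le> \<psi> (Suc j)" using mono nn by auto
  qed
  also have "\<dots> = real K * \<psi> (K * Suc N) ^ d" by simp
  finally have b: "(\<Sum>j\<in>{K * Suc N..<K * Suc N + K}. \<psi> (Suc j) ^ d) \<le> real K * \<psi> (K * Suc N) ^ d" .
  have "(\<Sum>j<K * Suc (Suc N). \<psi> (Suc j) ^ d) = (\<Sum>j<K * Suc N. \<psi> (Suc j) ^ d) + (\<Sum>j\<in>{K * Suc N..<K * Suc N + K}. \<psi> (Suc j) ^ d)"
    unfolding split by (rule sum.union_disjoint) auto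
  then show ?case using Suc b by (simp add: distrib_left)
qed

lemma subseq_summable:
  fixes \<psi> :: "nat \<Rightarrow> real" and K d :: nat
  assumes K: "K \<ge> 1" and nn: "\<forall>n\<ge>1. \<psi> n \<ge> 0"
    and mono: "\<forall>m n. 1 \<le> m \<and> m \<le> n \<longrightarrow> \<psi> n \<le> \<psi> m"
    and s: "summable (\<lambda>m. \<psi> (K * Suc m) ^ d)"
  shows "summable (\<lambda>n. \<psi> (Suc n) ^ d)"
proof (rule bounded_imp_summable)
  fix n
  show "0 \<le> \<psi> (Suc n) ^ d" using nn by simp
  have nn2: "\<And>m. 0 \<le> \<psi> (K * Suc m) ^ d" using nn K by simp
  have "(\<Sum>k\<le>n. \<psi> (Suc k) ^ d) = (\<Sum>k<Suc n. \<psi> (Suc k) ^ d)"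
    by (simp add: lessThan_Suc_atMost)
  also have "\<dots> \<le> (\<Sum>j<K * Suc (Suc n). \<psi> (Suc j) ^ d)"
  proof (intro sum_mono2)
    have "Suc n \<le> 1 * Suc (Suc n)" by simp
    also have "\<dots> \<le> K * Suc (Suc n)" using K by (intro mult_right_mono) auto
    finally show "{..<Suc n} \<subseteq> {..<K * Suc (Suc n)}" by auto
  qed (use nn in auto)
  also have "\<dots> \<le> real K * \<psi> 1 ^ d + real K * (\<Sum>m<Suc n. \<psi> (K * Suc m) ^ d)"
    by (rule block_bound[OF K nn mono])
  also have "\<dots> \<le> real K * \<psi> 1 ^ d + real K * suminf (\<lambda>m. \<psi> (K * Suc m) ^ d)"
    using sum_le_suminf[OF s, of "{..<Suc n}"] nn2 by (intro add_left_mono mult_left_mono) auto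
  finally show "(\<Sum>k\<le>n. \<psi> (Suc k) ^ d) \<le> real K * \<psi> 1 ^ d + real K * suminf (\<lambda>m. \<psi> (K * Suc m) ^ d)" .
qed

theorem lemma11:
  fixes x y :: "real ^ 'd" and u v :: nat
  assumes "u \<ge> 1" and "v \<ge> 1"
    and "(x, y) \<in> (PiSet :: ((real ^ 'd) \<times> (real ^ 'd)) set)"
  shows "((1 / real v) *\<^sub>R x, real u *\<^sub>R y) \<in> (PiSet :: ((real ^ 'd) \<times> (real ^ 'd)) set)"
proof -
  define K where "K = u * v"
  have K: "K \<ge> 1" using assms(1,2) by (simp add: K_def)
  show ?thesis unfolding PiSet_def
  proof (rule INT_I)
    fix \<psi> assume "\<psi> \<in> Dclass TYPE('d)"
    hence nn: "\<forall>n\<ge>1. \<psi> n \<ge> 0" and mono: "\<forall>m n. 1 \<le> m \<and> m \<le> n \<longrightarrow> \<psi> n \<le> \<psi> m"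
      and ns: "\<not> summable (\<lambda>n. \<psi> (Suc n) ^ CARD('d))" unfolding Dclass_def by auto
    define \<phi> where "\<phi> m = \<psi> (K * m) / real u" for m
    have "\<phi> \<in> Dclass TYPE('d)"
      unfolding Dclass_def
    proof (intro CollectI conjI allI impI)
      fix n :: nat assume "n \<ge> 1"
      then show "0 \<le> \<phi> n" using nn K unfolding \<phi>_def by simp
    next
      fix m n :: nat assume "1 \<le> m \<and> m \<le> n"
      then have "\<psi> (K * n) \<le> \<psi> (K * m)" using mono K by simp
      then show "\<phi> n \<le> \<phi> m" unfolding \<phi>_def by (simp add: divide_right_mono)
    next
      show "\<not> summable (\<lambda>n. \<phi> (Suc n) ^ CARD('d))"
      proof
        assume "summable (\<lambda>n. \<phi> (Suc n) ^ CARD('d))"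
        hence "summable (\<lambda>n. real u ^ CARD('d) * \<phi> (Suc n) ^ CARD('d))"
          by (rule summable_mult)
        moreover have "\<And>n. real u ^ CARD('d) * \<phi> (Suc n) ^ CARD('d) = \<psi> (K * Suc n) ^ CARD('d)"
          using assms(1) unfolding \<phi>_def by (simp add: power_divide)
        ultimately have "summable (\<lambda>n. \<psi> (K * Suc n) ^ CARD('d))" by simp
        from subseq_summable[OF K nn mono this] ns show False by simp
      qed
    qed
    with assms(3) have "(x, y) \<in> W \<phi>" unfolding PiSet_def by blast
    hence inf: "infinite {m::nat. m \<ge> 1 \<and> znorm (of_nat m *\<^sub>R x + y) < \<phi> m}"
      unfolding W_def by simp
    have sub: "(\<lambda>m. K * m) ` {m::nat. m \<ge> 1 \<and> znorm (of_nat m *\<^sub>R x + y) < \<phi> m}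
       \<subseteq> {n::nat. n \<ge> 1 \<and> znorm (of_nat n *\<^sub>R ((1 / real v) *\<^sub>R x) + real u *\<^sub>R y) < \<psi> n}"
    proof clarify
      fix m :: nat assume m1: "m \<ge> 1" and lt: "znorm (of_nat m *\<^sub>R x + y) < \<phi> m"
      have eq: "of_nat (K * m) *\<^sub>R ((1 / real v) *\<^sub>R x) + real u *\<^sub>R y = real u *\<^sub>R (of_nat m *\<^sub>R x + y)"
        using assms(2) by (simp add: K_def scaleR_add_right)
      have "znorm (real u *\<^sub>R (of_nat m *\<^sub>R x + y)) \<le> real u * znorm (of_nat m *\<^sub>R x + y)"
        by (rule znorm_scale)
      also have "\<dots> < real u * \<phi> m" using lt assms(1) by simp
      also have "\<dots> = \<psi> (K * m)" using assms(1) unfolding \<phi>_def by simp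
      finally show "1 \<le> K * m \<and> znorm (of_nat (K * m) *\<^sub>R ((1 / real v) *\<^sub>R x) + real u *\<^sub>R y) < \<psi> (K * m)"
        using eq m1 K by simp
    qed
    have "inj (\<lambda>m::nat. K * m)" using K by (intro injI) simp
    hence "infinite ((\<lambda>m. K * m) ` {m::nat. m \<ge> 1 \<and> znorm (of_nat m *\<^sub>R x + y) < \<phi> m})"
      using inf by (meson finite_imageD inj_on_subset subset_UNIV)
    hence "infinite {n::nat. n \<ge> 1 \<and> znorm (of_nat n *\<^sub>R ((1 / real v) *\<^sub>R x) + real u *\<^sub>R y) < \<psi> n}"
      using sub finite_subset by blast
    then show "((1 / real v) *\<^sub>R x, real u *\<^sub>R y) \<in> W \<psi>" unfolding W_def by simp
  qed
qed

end
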